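(* Let $e\geqslant 1$ be an integer and $b\geqslant 2$ an even integer. Assume that for every integer $a$ there exists an $(e,b)$-happy number $h$ with $h\equiv a\pmod{b-1}$. Then for every integer $a$ there exists an $(e,b)$-happy number $h'$ with $h'\equiv a\pmod{(b-1)^e}$.
   Context: For a positive integer $n=\sum_{j=0}^k a_j b^j$ with $0\leqslant a_j<b$, $T_{e,b}(n)=\sum_{j=0}^k a_j^e$; $T_{e,b}^r$ is the $r$-th iterate, $T_{e,b}^0(n)=n$. A positive integer $n$ is $(e,b)$-happy if $T_{e,b}^r(n)=1$ for some $r\geqslant 0$. *)

theory Defs
  imports "HOL-Number_Theory.Cong"
begin

fun T :: "nat \<Rightarrow> nat \<Rightarrow> nat \<Rightarrow> nat" where
  "T e b n = (if n = 0 \<or> b < 2 then 0 else (n mod b) ^ e + T e b (n div b))"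

definition happy :: "nat \<Rightarrow> nat \<Rightarrow> nat \<Rightarrow> bool" where
  "happy e b n \<longleftrightarrow> n > 0 \<and> (\<exists>r. (T e b ^^ r) n = 1)"

end

theory Submission
  imports Defs "HOL-Number_Theory.Number_Theory"
begin

declare T.simps[simp del]

lemma T0[simp]: "T e b 0 = 0" by (subst T.simps) simp

lemma Tstep:
  assumes "b \<ge> 2" "e \<ge> 1" "d < b"
  shows "T e b (q*b+d) = d^e + T e b q"
proof (cases "q*b+d = 0")
  case True
  then have "q = 0" "d = 0" using assms by auto
  then show ?thesis using assms by (simp add: T0)
next
  case False
  have "(q*b+d) mod b = d" using assms by simp
  moreover have "(q*b+d) div b = q" using assms by simp
  ultimately show ?thesis using False assms by (subst T.simps) (simp del: T.simps)
qed

lemma Tsplit: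
  assumes "b \<ge> 2" "e \<ge> 1"
  shows "y < b^j \<Longrightarrow> T e b (x*b^j + y) = T e b x + T e b y"
proof (induction j arbitrary: y)
  case 0
  then show ?case by simp
next
  case (Suc j)
  have b0: "b > 0" using assms by simp
  have yd: "y div b < b^j" using Suc.prems b0
    by (simp add: less_mult_imp_div_less mult.commute)
  have eq: "x*b^Suc j + y = (x*b^j + y div b)*b + y mod b"
    by (simp add: algebra_simps)
  have "T e b (x*b^Suc j + y) = (y mod b)^e + T e b (x*b^j + y div b)"
    unfolding eq using assms b0 by (simp add: Tstep)
  also have "\<dots> = (y mod b)^e + T e b x + T e b (y div b)"
    using Suc.IH[OF yd] by simp
  also have "T e b y = (y mod b)^e + T e b (y div b)"
    using Tstep[OF assms, of "y mod b" "y div b"] b0 by simp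
  ultimately show ?case by simp
qed

lemma T1: assumes "b \<ge> 2" "e \<ge> 1" shows "T e b 1 = 1"
  using Tstep[OF assms, of 1 0] assms by simp

lemma Tb: assumes "b \<ge> 2" "e \<ge> 1" shows "T e b b = 1"
  using Tstep[OF assms, of 0 1] assms T1[OF assms] by simp

lemma happy_pre:
  assumes "happy e b h" "T e b n = h" "n > 0"
  shows "happy e b n"
proof -
  obtain r where "(T e b ^^ r) h = 1" using assms(1) unfolding happy_def by blast
  then have "(T e b ^^ Suc r) n = 1" using assms(2) by (simp add: funpow_Suc_right del: funpow.simps)
  then show ?thesis using assms(3) unfolding happy_def by blast
qed

theorem corollary2p2:
  fixes e b :: nat
  assumes "e \<ge> 1" and "b \<ge> 2" and "even b"
    and "\<forall>a::int. \<exists>h. happy e b h \<and> [int h = a] (mod (int b - 1))"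
  shows "\<forall>a::int. \<exists>h'. happy e b h' \<and> [int h' = a] (mod ((int b - 1) ^ e))"
proof
  fix a :: int
  define m where "m = b - 1"
  define M where "M = m ^ e"
  have m1: "m \<ge> 1" using assms(2) unfolding m_def by simp
  have M1: "M \<ge> 1" unfolding M_def using m1 by simp
  have mM: "m dvd M" unfolding M_def using assms(1) by (simp add: dvd_power)
  have bm: "b = m + 1" using assms(2) unfolding m_def by simp
  have intM: "int M = (int b - 1) ^ e" unfolding M_def m_def using assms(2) by (simp add: of_nat_diff)
  have intm: "int m = int b - 1" unfolding m_def using assms(2) by (simp add: of_nat_diff)
  define t where "t = totient M"
  have t1: "t \<ge> 1" unfolding t_def using M1 by (simp add: Suc_le_eq totient_gt_0_iff)
  define L where "L = t * (M + 2)"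
  have LM: "L \<ge> M + 2" unfolding L_def using mult_le_mono1[OF t1, of "M+2"] by simp
  have cop: "coprime b M"
    unfolding M_def bm by (simp add: coprime_power_right_iff)
  have bt: "[b ^ t = 1] (mod M)" unfolding t_def using euler_theorem[OF cop] .
  have bL: "[b ^ L = 1] (mod M)" unfolding L_def power_mult
    using cong_pow[OF bt, of "M+2"] by simp
  have "M < 2 ^ L" using LM less_exp[of L] by linarith
  also have "2 ^ L \<le> b ^ L" using assms(2) by (simp add: power_mono)
  finally have bLM: "M < b ^ L" .
  have bbL: "b < b ^ L"
  proof -
    have "b ^ 1 < b ^ L" using LM assms(2) by (intro power_strict_increasing) auto
    then show ?thesis by simp
  qed
  define S1 where "S1 = (\<lambda>n. n * b^L + 1)"
  define Sb where "Sb = (\<lambda>n. n * b^L + b)"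
  have TS1: "T e b (S1 n) = T e b n + 1" for n
    unfolding S1_def using Tsplit[OF assms(2,1), of 1 L n] T1[OF assms(2,1)] bbL assms(2) by simp
  have TSb: "T e b (Sb n) = T e b n + 1" for n
    unfolding Sb_def using Tsplit[OF assms(2,1), of b L n] Tb[OF assms(2,1)] bbL by simp
  have TS1k: "T e b ((S1^^k) 0) = k" for k by (induction k) (simp_all add: TS1)
  have TSbk: "T e b ((Sb^^k) x) = T e b x + k" for k x by (induction k) (simp_all add: TSb)
  have CS1: "[S1 n = n + 1] (mod M)" for n
    unfolding S1_def using cong_add[OF cong_mult[OF cong_refl[of n] bL] cong_refl[of 1]] by simp
  have CSb: "[Sb n = n + b] (mod M)" for n
    unfolding Sb_def using cong_add[OF cong_mult[OF cong_refl[of n] bL] cong_refl[of b]] by simp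
  have CS1k: "[(S1^^k) 0 = k] (mod M)" for k
  proof (induction k)
    case 0 then show ?case by simp
  next
    case (Suc k)
    have "[S1 ((S1^^k) 0) = (S1^^k) 0 + 1] (mod M)" by (rule CS1)
    also have "[(S1^^k) 0 + 1 = k + 1] (mod M)" using Suc.IH by (intro cong_add) auto
    finally show ?case by simp
  qed
  have CSbk: "[(Sb^^k) x = x + k*b] (mod M)" for k x
  proof (induction k)
    case 0 then show ?case by simp
  next
    case (Suc k)
    have "[Sb ((Sb^^k) x) = (Sb^^k) x + b] (mod M)" by (rule CSb)
    also have "[(Sb^^k) x + b = x + k*b + b] (mod M)" using Suc.IH by (intro cong_add) auto
    finally show ?case by (simp add: algebra_simps)
  qed
  have S1pos: "(S1^^k) 0 \<ge> 1" if "k \<ge> 1" for k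
    using that by (cases k) (simp_all add: S1_def)
  define c where "c = nat (a mod int M)"
  have cM: "c < M" unfolding c_def using M1 by (simp add: nat_less_iff)
  have ca: "[int c = a] (mod int M)" unfolding c_def using M1
    by (simp add: cong_def)
  obtain h0 where h0: "happy e b h0" "[int h0 = a] (mod (int b - 1))" using assms(4) by blast
  have h0c: "[h0 = c] (mod m)"
  proof -
    have "[a = int c] (mod int m)"
      using cong_dvd_modulus[OF cong_sym[OF ca]] mM by (simp add: of_nat_dvd_iff)
    with h0(2) have "[int h0 = int c] (mod int m)" unfolding intm[symmetric]
      using cong_trans by blast
    then show ?thesis by (simp add: cong_int_iff)
  qed
  have h0pos: "h0 \<ge> 1" using h0(1) unfolding happy_def by simp
  define h where "h = (S1^^h0) 0 * b^L"
  have Th: "T e b h = h0" unfolding h_def using Tsplit[OF assms(2,1), of 0 L "(S1^^h0) 0"] TS1k assms(2) by simp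
  have hM: "h \<ge> M"
  proof -
    have "1 * b^L \<le> (S1^^h0) 0 * b^L" by (rule mult_le_mono1[OF S1pos[OF h0pos]])
    then have "b^L \<le> h" unfolding h_def by (simp only: mult_1)
    then show ?thesis using bLM by linarith
  qed
  have hpos: "h > 0" using hM M1 by simp
  have hh: "happy e b h" using happy_pre[OF h0(1) Th hpos] .
  have hc: "[h = c] (mod m)"
  proof -
    have "[h = h0 * 1] (mod M)" unfolding h_def by (intro cong_mult CS1k bL)
    then have "[h = h0] (mod M)" by simp
    then have "[h = h0] (mod m)" using mM by (rule cong_dvd_modulus_nat)
    then show ?thesis using h0c cong_trans by blast
  qed
  have dv: "m dvd (c + M*h - h)"
  proof -
    have "[c + M*h = c] (mod m)" using mM by (auto simp: cong_def mult.assoc elim!: dvdE)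
    then have "[c + M*h = h] (mod m)" using hc cong_sym cong_trans by blast
    moreover have "c + M*h \<ge> h" using mult_le_mono1[OF M1, of h] by linarith
    ultimately show ?thesis using cong_altdef_nat by blast
  qed
  define q where "q = (c + M*h - h) div m"
  have mq: "m*q = c + M*h - h" unfolding q_def using dv by simp
  define P where "P = m^(e-1)"
  have MP: "M = m * P" unfolding M_def P_def using assms(1)
    by (cases e) auto
  have P1: "P \<ge> 1" unfolding P_def using m1 by simp
  define k2 where "k2 = q mod P"
  have k2P: "k2 < P" unfolding k2_def using P1 by simp
  have PM: "P \<le> M" unfolding MP using m1 by simp
  have k2h: "k2 \<le> h" using k2P PM hM by simp
  have E: "h + k2*m + (q div P)*M = c + M*h"
  proof -
    have qq: "q mod P + q div P * P = q" by simp
    have "k2*m + (q div P)*M = m * (q mod P) + m * (P * (q div P))" unfolding k2_def MP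
      by (simp only: mult.commute mult.left_commute)
    also have "\<dots> = m * (q mod P + P * (q div P))" by (simp only: add_mult_distrib2)
    also have "\<dots> = q * m" by (simp only: mod_mult_div_eq mult.commute)
    finally have "k2*m + (q div P)*M = q*m" .
    moreover have "q*m = c + M*h - h" using mq by (simp add: mult.commute)
    moreover have "h \<le> M*h" using mult_le_mono1[OF M1, of h] by simp
    ultimately show ?thesis by linarith
  qed
  have hk: "[h + k2*m = c] (mod M)"
  proof -
    have "(h + k2*m) mod M = (h + k2*m + (q div P)*M) mod M" by simp
    also have "\<dots> = (c + M*h) mod M" using E by simp
    also have "\<dots> = c mod M" by simp
    finally show ?thesis unfolding cong_def .
  qed
  define N where "N = (Sb^^k2) ((S1^^(h-k2)) 0)"
  have TN: "T e b N = h" unfolding N_def using TSbk TS1k k2h by simp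
  have Npos: "N > 0"
  proof (rule ccontr)
    assume "\<not> N > 0"
    then have "N = 0" by simp
    then have "T e b N = 0" by simp
    then show False using TN hpos by simp
  qed
  have hN: "happy e b N" using happy_pre[OF hh TN Npos] .
  have "[N = (h-k2) + k2*b] (mod M)"
    unfolding N_def using cong_trans[OF CSbk cong_add[OF CS1k cong_refl]] by blast
  moreover have "(h-k2) + k2*b = h + k2*m" using k2h bm by (simp add: algebra_simps)
  ultimately have "[N = h + k2*m] (mod M)" by simp
  then have "[N = c] (mod M)" using hk by (rule cong_trans)
  then have "[int N = int c] (mod int M)" by (simp add: cong_int_iff)
  then have "[int N = a] (mod int M)" using ca cong_trans by blast
  then show "\<exists>h'. happy e b h' \<and> [int h' = a] (mod ((int b - 1) ^ e))"
    using hN intM by (intro exI[of _ N]) simp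
qed

end
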